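(* Let $f$ satisfy the standing assumptions (A) and let $a$ be defined as below. Assume there exists $\tilde\sigma>\sigma$ such that $a$ is nondecreasing on $[\sigma,\tilde\sigma]$. Then there exists a sequence $(f_n)_{n\in\mathbb{N}}$ of convex functions with $f_n(0)=0$ and $f_n(s)/s\to\infty$ as $s\to\infty$ such that: (i) $f_n\in C^1([0,+\infty))\cap C^3((0,+\infty))$; (ii) $f_n\to f$ uniformly on compact subsets of $[0,+\infty)$; (iii) $f_n'(0)=0$, $f_n'$ decreases in $n$ to $f'$ and $f_n'\to f'$ uniformly on compact subsets of $[0,+\infty)$; (iv) $f_n''>0$ on $(0,+\infty)$; (v) $\lim_{s\to0^+}\frac{sf_n''(s)-f_n'(s)}{s^3}=0$ and $\lim_{s\to0^+}\frac{f_n'(s)}{s}=0$ for each $n$; (vi) $\lim_{n\to\infty}\frac{sf_n''(s)-f_n'(s)}{s^3}=0$ and $\lim_{n\to\infty}\frac{f_n'(s)}{s}=0$ uniformly on compact subsets of $[0,\sigma)$; (vii) $a_n\to a$ uniformly on compact subsets of $(0,+\infty)$ and $b_n\to b$ uniformly on compact subsets of $(\sigma,+\infty)$; and (viii) if moreover $f\in C^2((0,+\infty))$, then $f_n''\to f''$ uniformly on compact subsets of $(0,+\infty)$.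
   Context: Standing assumptions (A) on $f:[0,+\infty)\to\mathbb{R}$: $f$ convex, nondecreasing, and there is $\sigma>0$ with $f\in C^1([0,+\infty))\cap C^3((\sigma,+\infty))$; $f(0)=0$ and $\lim_{s\to+\infty}f(s)/s=+\infty$; $f'(s)=0$ for $0\le s\le\sigma$; $f''(s)>0$ for $s>\sigma$. Define $a(s)=\frac{f'(s)}{sf''(s)}$ and $b(s)=\frac{s^2}{f''(s)}$ for $s>\sigma$, and $a(s)=b(s)=0$ for $0\le s\le\sigma$; and $a_n(s)=\frac{f_n'(s)}{sf_n''(s)}$, $b_n(s)=\frac{s^2}{f_n''(s)}$ for $s>0$. *)

theory Defs
  imports "HOL-Analysis.Analysis"
begin

text \<open>The functions a and b of the paper, built from sigma and the first and second
derivatives f1 = f', f2 = f'' of f: a(s) = f'(s)/(s f''(s)), b(s) = s^2/f''(s) for s > sigma,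
and 0 otherwise.\<close>

definition a_fun :: "real \<Rightarrow> (real \<Rightarrow> real) \<Rightarrow> (real \<Rightarrow> real) \<Rightarrow> real \<Rightarrow> real" where
  "a_fun \<sigma> f1 f2 s = (if s > \<sigma> then f1 s / (s * f2 s) else 0)"

definition b_fun :: "real \<Rightarrow> (real \<Rightarrow> real) \<Rightarrow> real \<Rightarrow> real" where
  "b_fun \<sigma> f2 s = (if s > \<sigma> then s^2 / f2 s else 0)"

end

theory Submission
  imports Defs "HOL-Real_Asymp.Real_Asymp"
begin


lemma deriv_glue:
  fixes f g h :: "real \<Rightarrow> real"
  assumes f: "(f has_real_derivative D) (at x)" and g: "(g has_real_derivative D) (at x)"
    and e: "e > 0"
    and hf: "\<And>y. x - e < y \<Longrightarrow> y \<le> x \<Longrightarrow> h y = f y"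
    and hg: "\<And>y. x \<le> y \<Longrightarrow> y < x + e \<Longrightarrow> h y = g y"
  shows "(h has_real_derivative D) (at x)"
proof -
  have hx: "h x = f x" "h x = g x" using hf[of x] hg[of x] e by auto
  have fl: "((\<lambda>y. (f y - f x) / (y - x)) \<longlongrightarrow> D) (at_left x)"
    using f unfolding has_field_derivative_iff by (rule tendsto_mono[rotated]) (simp add: at_le)
  have gr: "((\<lambda>y. (g y - g x) / (y - x)) \<longlongrightarrow> D) (at_right x)"
    using g unfolding has_field_derivative_iff by (rule tendsto_mono[rotated]) (simp add: at_le)
  have l: "((\<lambda>y. (h y - h x) / (y - x)) \<longlongrightarrow> D) (at_left x)"
  proof (rule tendsto_cong[THEN iffD1, OF _ fl])
    have "eventually (\<lambda>y. y \<in> {x-e<..<x}) (at_left x)"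
      using e by (intro eventually_at_left_real) auto
    then show "\<forall>\<^sub>F y in at_left x. (f y - f x) / (y - x) = (h y - h x) / (y - x)"
      by eventually_elim (use hf hx in auto)
  qed
  have r: "((\<lambda>y. (h y - h x) / (y - x)) \<longlongrightarrow> D) (at_right x)"
  proof (rule tendsto_cong[THEN iffD1, OF _ gr])
    have "eventually (\<lambda>y. y \<in> {x<..<x+e}) (at_right x)"
      using e by (intro eventually_at_right_real) auto
    then show "\<forall>\<^sub>F y in at_right x. (g y - g x) / (y - x) = (h y - h x) / (y - x)"
      by eventually_elim (use hg hx in auto)
  qed
  show ?thesis unfolding has_field_derivative_iff
    using l r by (subst at_eq_sup_left_right) (rule filterlim_sup)
qed

definition clmp :: "real \<Rightarrow> real" where "clmp x = max 0 (min 1 x)"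

lemma clmp_deriv:
  fixes q q' :: "real \<Rightarrow> real"
  assumes q: "\<And>y. (q has_real_derivative q' y) (at y)" and q0: "q' 0 = 0" and q1: "q' 1 = 0"
  shows "((\<lambda>x. q (clmp x)) has_real_derivative q' (clmp x)) (at x)"
proof -
  consider "x < 0" | "x = 0" | "0 < x \<and> x < 1" | "x = 1" | "x > 1" by linarith
  then show ?thesis
  proof cases
    case 1
    have "((\<lambda>_. q 0) has_real_derivative 0) (at x)" by simp
    then have "((\<lambda>x. q (clmp x)) has_real_derivative 0) (at x)"
      by (rule has_field_derivative_transform_within_open[where S="{..<0}"])
         (use 1 in \<open>auto simp: clmp_def\<close>)
    then show ?thesis using 1 q0 q1 by (simp add: clmp_def)
  next
    case 2
    have "((\<lambda>x. q (clmp x)) has_real_derivative 0) (at x)"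
      by (rule deriv_glue[where f="\<lambda>_. q 0" and g=q and e=1]) (use 2 q[of 0] q q0 in \<open>auto simp: clmp_def\<close>)
    then show ?thesis using 2 q0 by (simp add: clmp_def)
  next
    case 3
    show ?thesis
      by (rule has_field_derivative_transform_within_open[where S="{0<..<1}" and f=q])
         (use 3 q in \<open>auto simp: clmp_def\<close>)
  next
    case 4
    have "((\<lambda>x. q (clmp x)) has_real_derivative 0) (at x)"
      by (rule deriv_glue[where g="\<lambda>_. q 1" and f=q and e=1]) (use 4 q[of 1] q q1 in \<open>auto simp: clmp_def\<close>)
    then show ?thesis using 4 q1 by (simp add: clmp_def)
  next
    case 5
    have "((\<lambda>_. q 1) has_real_derivative 0) (at x)" by simp
    then have "((\<lambda>x. q (clmp x)) has_real_derivative 0) (at x)"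
      by (rule has_field_derivative_transform_within_open[where S="{1<..}"])
         (use 5 in \<open>auto simp: clmp_def\<close>)
    then show ?thesis using 5 q0 q1 by (simp add: clmp_def)
  qed
qed

definition p0 :: "real \<Rightarrow> real" where "p0 y = 6*y^5 - 15*y^4 + 10*y^3"
definition p1 :: "real \<Rightarrow> real" where "p1 y = 30*y^4 - 60*y^3 + 30*y^2"
definition p2 :: "real \<Rightarrow> real" where "p2 y = 120*y^3 - 180*y^2 + 60*y"

definition Th :: "real \<Rightarrow> real" where "Th x = p0 (clmp x)"
definition Th1 :: "real \<Rightarrow> real" where "Th1 x = p1 (clmp x)"
definition Th2 :: "real \<Rightarrow> real" where "Th2 x = p2 (clmp x)"

lemma Th_deriv: "(Th has_real_derivative Th1 x) (at x)"
proof -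
  have "(p0 has_real_derivative p1 y) (at y)" for y
    unfolding p0_def p1_def by (rule derivative_eq_intros refl)+ (simp add: eval_nat_numeral algebra_simps)
  then show ?thesis unfolding Th_def Th1_def
    by (intro clmp_deriv) (auto simp: p1_def)
qed

lemma Th1_deriv: "(Th1 has_real_derivative Th2 x) (at x)"
proof -
  have "(p1 has_real_derivative p2 y) (at y)" for y
    unfolding p1_def p2_def by (rule derivative_eq_intros refl)+ (simp add: eval_nat_numeral algebra_simps)
  then show ?thesis unfolding Th1_def Th2_def
    by (intro clmp_deriv) (auto simp: p2_def)
qed

lemma clmp_cont: "continuous_on UNIV clmp"
  unfolding clmp_def by (intro continuous_intros)

lemma Th2_cont: "continuous_on UNIV Th2"
  unfolding Th2_def p2_def clmp_def by (intro continuous_intros)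

lemma clmp_range: "0 \<le> clmp x" "clmp x \<le> 1" by (auto simp: clmp_def)

lemma Th_zero: "x \<le> 0 \<Longrightarrow> Th x = 0" "x \<le> 0 \<Longrightarrow> Th1 x = 0" "x \<le> 0 \<Longrightarrow> Th2 x = 0"
  by (auto simp: Th_def Th1_def Th2_def clmp_def p0_def p1_def p2_def)

lemma Th_one: "x \<ge> 1 \<Longrightarrow> Th x = 1" "x \<ge> 1 \<Longrightarrow> Th1 x = 0"
  by (auto simp: Th_def Th1_def clmp_def p0_def p1_def)

lemma Th1_nonneg: "Th1 x \<ge> 0"
proof -
  have "p1 y = 30*y^2*(y-1)^2" for y by (simp add: p1_def power2_eq_square power3_eq_cube power4_eq_xxxx algebra_simps)
  then show ?thesis unfolding Th1_def by simp
qed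

lemma Th1_le: "Th1 x \<le> 2"
proof -
  have eq: "p1 y = 30*(y*(1-y))^2" for y by (simp add: p1_def power2_eq_square power3_eq_cube power4_eq_xxxx algebra_simps)
  have "p1 y \<le> 2" if "0 \<le> y" "y \<le> 1" for y
  proof -
    have "1/4 - y*(1-y) = (y - 1/2)^2" by (simp add: power2_eq_square algebra_simps)
    then have a: "y*(1-y) \<le> 1/4" using zero_le_power2[of "y - 1/2"] by linarith
    have b: "0 \<le> y*(1-y)" using that by simp
    have "(y*(1-y))^2 \<le> (1/4)^2" by (rule power_mono[OF a b])
    then have "(y*(1-y))^2 \<le> 1/16" by (simp add: power2_eq_square)
    then show ?thesis unfolding eq by linarith
  qed
  then show ?thesis unfolding Th1_def using clmp_range by blast
qed

lemma Th_mono: "x \<le> y \<Longrightarrow> Th x \<le> Th y"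
  using DERIV_nonneg_imp_nondecreasing[of x y Th] Th_deriv Th1_nonneg by blast

lemma Th_range: "0 \<le> Th x" "Th x \<le> 1"
proof -
  have "Th (min 0 x) \<le> Th x" by (rule Th_mono) simp
  then show "0 \<le> Th x" using Th_zero(1)[of "min 0 x"] by simp
  have "Th x \<le> Th (max 1 x)" by (rule Th_mono) simp
  then show "Th x \<le> 1" using Th_one(1)[of "max 1 x"] by simp
qed




definition hh :: "real \<Rightarrow> real \<Rightarrow> real" where
  "hh k s = (if s > 0 then exp (-k/s) else 0)"
definition hh1 :: "real \<Rightarrow> real \<Rightarrow> real" where
  "hh1 k s = (if s > 0 then k/s^2 * exp (-k/s) else 0)"
definition hh2 :: "real \<Rightarrow> real \<Rightarrow> real" where
  "hh2 k s = (if s > 0 then (k^2/s^4 - 2*k/s^3) * exp (-k/s) else 0)"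

lemma hh_deriv: "x > 0 \<Longrightarrow> (hh k has_real_derivative hh1 k x) (at x)"
proof -
  assume x: "x > 0"
  have "((\<lambda>s. exp (-k/s)) has_real_derivative k/x^2 * exp (-k/x)) (at x)"
    using x by (auto intro!: derivative_eq_intros simp: power2_eq_square field_simps)
  then have "(hh k has_real_derivative k/x^2 * exp (-k/x)) (at x)"
    by (rule has_field_derivative_transform_within_open[where S="{0<..}"])
       (use x in \<open>auto simp: hh_def\<close>)
  then show ?thesis using x by (simp add: hh1_def)
qed

lemma hh1_deriv: "x > 0 \<Longrightarrow> (hh1 k has_real_derivative hh2 k x) (at x)"
proof -
  assume x: "x > 0"
  have "((\<lambda>s. k/s^2 * exp (-k/s)) has_real_derivative (k^2/x^4 - 2*k/x^3) * exp (-k/x)) (at x)"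
    using x by (auto intro!: derivative_eq_intros simp: power2_eq_square power3_eq_cube power4_eq_xxxx field_simps)
  then have "(hh1 k has_real_derivative (k^2/x^4 - 2*k/x^3) * exp (-k/x)) (at x)"
    by (rule has_field_derivative_transform_within_open[where S="{0<..}"])
       (use x in \<open>auto simp: hh1_def\<close>)
  then show ?thesis using x by (simp add: hh2_def)
qed

lemma hh2_cont: "continuous_on {0<..} (hh2 k)"
proof -
  have "continuous_on {0<..} (\<lambda>s. (k^2/s^4 - 2*k/s^3) * exp (-k/s))"
    by (intro continuous_intros) auto
  then show ?thesis by (rule continuous_on_cong[THEN iffD1, rotated 2]) (auto simp: hh2_def)
qed

lemma exp_bound: "(x::real) > 0 \<Longrightarrow> exp (-x) \<le> 3125 / x^5"
proof -
  assume x: "x > 0"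
  have "x/5 \<le> exp (x/5)" using exp_ge_add_one_self[of "x/5"] by linarith
  then have "(x/5)^5 \<le> exp (x/5)^5" using x by (intro power_mono) auto
  also have "exp (x/5)^5 = exp x" using exp_of_nat_mult[of 5 "x/5"] by simp
  finally have "x^5 \<le> 3125 * exp x" by (simp add: power_divide)
  then show ?thesis using x by (simp add: exp_minus field_simps)
qed

lemma hh_nonneg: "hh k s \<ge> 0" by (simp add: hh_def)
lemma hh1_pos: "k > 0 \<Longrightarrow> s > 0 \<Longrightarrow> hh1 k s > 0" by (simp add: hh1_def)
lemma hh1_nonneg: "k \<ge> 0 \<Longrightarrow> hh1 k s \<ge> 0" by (simp add: hh1_def)
lemma hh_nonpos: "s \<le> 0 \<Longrightarrow> hh k s = 0" "s \<le> 0 \<Longrightarrow> hh1 k s = 0"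
  by (auto simp: hh_def hh1_def)

lemma hh_bound: assumes "k > 0" "s > 0" shows "hh k s \<le> 3125 * s^5 / k^5"
proof -
  have "exp (-(k/s)) \<le> 3125 / (k/s)^5" using assms by (intro exp_bound) auto
  then show ?thesis using assms by (simp add: hh_def power_divide field_simps)
qed

lemma hh1_bound: assumes "k > 0" "s > 0" shows "hh1 k s \<le> 3125 * s^3 / k^4"
proof -
  have "exp (-(k/s)) \<le> 3125 / (k/s)^5" using assms by (intro exp_bound) auto
  then have "k/s^2 * exp (-(k/s)) \<le> k/s^2 * (3125 / (k/s)^5)"
    using assms by (intro mult_left_mono) auto
  also have "\<dots> = 3125 * s^3 / k^4" using assms
    by (simp add: power_divide field_simps eval_nat_numeral)
  finally show ?thesis using assms by (simp add: hh1_def)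
qed

lemma hh_div_bound: assumes "k > 0" "s > 0" shows "hh k s / s \<le> 3125 * s^4 / k^5"
proof -
  have "hh k s / s \<le> (3125 * s^5 / k^5) / s"
    using hh_bound[OF assms] assms by (intro divide_right_mono) auto
  also have "\<dots> = 3125 * s^4 / k^5" using assms by (simp add: eval_nat_numeral field_simps)
  finally show ?thesis .
qed

lemma hh_cubic_bound: assumes "k > 0" "s > 0"
  shows "\<bar>(s * hh1 k s - hh k s) / s^3\<bar> \<le> 3125 * (s / k^4 + s^2 / k^5)"
proof -
  have "\<bar>s * hh1 k s - hh k s\<bar> \<le> s * hh1 k s + hh k s"
    using mult_nonneg_nonneg[OF _ hh1_nonneg[of k s]] hh_nonneg[of k s] assms by (auto simp: abs_if)
  also have "\<dots> \<le> s * (3125 * s^3 / k^4) + 3125 * s^5 / k^5"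
    using hh1_bound[OF assms] hh_bound[OF assms] assms by (intro add_mono mult_left_mono) auto
  finally have "\<bar>s * hh1 k s - hh k s\<bar> / s^3 \<le> (s * (3125 * s^3 / k^4) + 3125 * s^5 / k^5) / s^3"
    using assms by (intro divide_right_mono) auto
  also have "\<dots> = 3125 * (s / k^4 + s^2 / k^5)" using assms
    by (simp add: eval_nat_numeral field_simps)
  finally show ?thesis using assms by (simp add: abs_divide)
qed

lemma hh_ratio: assumes "k > 0" "s > 0" shows "hh k s = s^2 / k * hh1 k s"
  using assms by (simp add: hh_def hh1_def field_simps)

lemma hh_le_id: assumes "k > 0" "s > 0" shows "hh k s \<le> s / k"
proof -
  have "k/s \<le> exp (k/s)" using exp_ge_add_one_self[of "k/s"] by linarith
  then have "exp (-(k/s)) \<le> s/k" using assms by (simp add: exp_minus field_simps)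
  then show ?thesis using assms by (simp add: hh_def)
qed

lemma hh_cont: assumes "k > 0" shows "continuous_on UNIV (hh k)"
proof -
  have "isCont (hh k) x" for x
  proof -
    consider "x < 0" | "x = 0" | "x > 0" by linarith
    then show ?thesis
    proof cases
      case 1
      have "((\<lambda>_. 0::real) has_real_derivative 0) (at x)" by simp
      then have "(hh k has_real_derivative 0) (at x)"
        by (rule has_field_derivative_transform_within_open[where S="{..<0}"])
           (use 1 in \<open>auto simp: hh_def\<close>)
      then show ?thesis using DERIV_isCont by blast
    next
      case 2
      have l: "(hh k \<longlongrightarrow> 0) (at_left 0)"
      proof (rule tendsto_eventually)
        show "\<forall>\<^sub>F s in at_left 0. hh k s = 0"
          by (simp add: eventually_at_filter hh_def)
      qed
      have r: "(hh k \<longlongrightarrow> 0) (at_right 0)"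
      proof (rule tendsto_sandwich[where f="\<lambda>_. 0" and h="\<lambda>s. s / k"])
        show "\<forall>\<^sub>F s in at_right 0. 0 \<le> hh k s" by (simp add: hh_nonneg)
        show "\<forall>\<^sub>F s in at_right 0. hh k s \<le> s / k"
          using hh_le_id[OF assms] by (simp add: eventually_at_filter)
        show "((\<lambda>s. s / k) \<longlongrightarrow> 0) (at_right 0)"
          using assms by (auto intro!: tendsto_eq_intros)
      qed simp
      have "(hh k \<longlongrightarrow> 0) (at 0)"
        using l r by (subst at_eq_sup_left_right) (rule filterlim_sup)
      then show ?thesis using 2 by (simp add: isCont_def hh_def)
    next
      case 3 then show ?thesis using hh_deriv DERIV_isCont by blast
    qed
  qed
  then show ?thesis by (simp add: continuous_at_imp_continuous_on)
qed

lemma hh_mono_k: assumes "0 < k" "k \<le> k'" shows "hh k' s \<le> hh k s"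
  using assms by (auto simp: hh_def divide_right_mono)

lemma hh_gap: assumes "\<sigma> > 0" "\<sigma> \<le> s" "s \<le> \<sigma> + 2" "k > 0"
  shows "hh k s - hh (k+1) s \<ge> exp (-k/\<sigma>) * (1 - exp (-1/(\<sigma>+2)))"
proof -
  have s: "s > 0" using assms by simp
  have "hh k s - hh (k+1) s = exp (-k/s) * (1 - exp (-1/s))"
    using s by (simp add: hh_def field_simps flip: exp_add)
  moreover have "exp (-k/\<sigma>) \<le> exp (-k/s)"
    using assms s by (simp add: frac_le)
  moreover have "1 - exp (-1/(\<sigma>+2)) \<le> 1 - exp (-1/s)"
    using assms s by (simp add: frac_le)
  moreover have "0 \<le> 1 - exp (-1/(\<sigma>+2))" using assms by simp
  ultimately show ?thesis by (metis mult_mono exp_ge_zero)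
qed




definition thc :: "real \<Rightarrow> real \<Rightarrow> real \<Rightarrow> real" where
  "thc \<sigma> d s = Th ((s - \<sigma> - d) / d)"
definition th1c :: "real \<Rightarrow> real \<Rightarrow> real \<Rightarrow> real" where
  "th1c \<sigma> d s = Th1 ((s - \<sigma> - d) / d) / d"
definition th2c :: "real \<Rightarrow> real \<Rightarrow> real \<Rightarrow> real" where
  "th2c \<sigma> d s = Th2 ((s - \<sigma> - d) / d) / d^2"

lemma thc_deriv: assumes "d > 0" shows "(thc \<sigma> d has_real_derivative th1c \<sigma> d x) (at x)"
proof -
  have "((\<lambda>s. Th ((s - \<sigma> - d) / d)) has_real_derivative Th1 ((x - \<sigma> - d) / d) * (1 / d)) (at x)"
    by (rule DERIV_chain2[OF Th_deriv]) (use assms in \<open>auto intro!: derivative_eq_intros\<close>)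
  then show ?thesis by (simp add: thc_def[abs_def] th1c_def)
qed

lemma th1c_deriv: assumes "d > 0" shows "(th1c \<sigma> d has_real_derivative th2c \<sigma> d x) (at x)"
proof -
  have "((\<lambda>s. Th1 ((s - \<sigma> - d) / d)) has_real_derivative Th2 ((x - \<sigma> - d) / d) * (1 / d)) (at x)"
    by (rule DERIV_chain2[OF Th1_deriv]) (use assms in \<open>auto intro!: derivative_eq_intros\<close>)
  then have "((\<lambda>s. Th1 ((s - \<sigma> - d) / d) / d) has_real_derivative Th2 ((x - \<sigma> - d) / d) * (1 / d) / d) (at x)"
    by (rule DERIV_cdivide)
  then show ?thesis by (simp add: th1c_def[abs_def] th2c_def power2_eq_square)
qed

lemma th2c_cont: assumes "d > 0" shows "continuous_on UNIV (th2c \<sigma> d)"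
proof -
  have "continuous_on UNIV (\<lambda>s. Th2 ((s - \<sigma> - d) / d) / d^2)"
    using assms by (intro continuous_intros continuous_on_compose2[OF Th2_cont]) auto
  then show ?thesis by (simp add: th2c_def[abs_def])
qed

lemma thc_cont: assumes "d > 0" shows "continuous_on UNIV (thc \<sigma> d)"
  using thc_deriv[OF assms] DERIV_isCont continuous_at_imp_continuous_on by blast

lemma th1c_cont: assumes "d > 0" shows "continuous_on UNIV (th1c \<sigma> d)"
  using th1c_deriv[OF assms] DERIV_isCont continuous_at_imp_continuous_on by blast

lemma thc_zero: assumes "d > 0" "s \<le> \<sigma> + d"
  shows "thc \<sigma> d s = 0" "th1c \<sigma> d s = 0" "th2c \<sigma> d s = 0"
proof -
  have "(s - \<sigma> - d) / d \<le> 0" using assms by (simp add: divide_nonpos_pos)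
  then show "thc \<sigma> d s = 0" "th1c \<sigma> d s = 0" "th2c \<sigma> d s = 0"
    by (simp_all add: thc_def th1c_def th2c_def Th_zero)
qed

lemma thc_one: assumes "d > 0" "s \<ge> \<sigma> + 2*d"
  shows "thc \<sigma> d s = 1" "th1c \<sigma> d s = 0"
proof -
  have "(s - \<sigma> - d) / d \<ge> 1" using assms by (simp add: le_divide_eq)
  then show "thc \<sigma> d s = 1" "th1c \<sigma> d s = 0"
    by (simp_all add: thc_def th1c_def Th_one)
qed

lemma thc_range: "0 \<le> thc \<sigma> d s" "thc \<sigma> d s \<le> 1"
  by (simp_all add: thc_def Th_range)

lemma th1c_range: assumes "d > 0" shows "0 \<le> th1c \<sigma> d s" "th1c \<sigma> d s \<le> 2 / d"
  using assms Th1_nonneg Th1_le by (simp_all add: th1c_def divide_right_mono)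


locale L =
  fixes f f1 f2 f3 :: "real \<Rightarrow> real" and \<sigma> :: real and \<delta> :: "nat \<Rightarrow> real"
  assumes sigma_pos: "\<sigma> > 0"
    and f1_cont: "continuous_on {0..} f1"
    and f1_deriv: "\<forall>x>\<sigma>. (f1 has_real_derivative f2 x) (at x)"
    and f2_deriv: "\<forall>x>\<sigma>. (f2 has_real_derivative f3 x) (at x)"
    and f3_cont: "continuous_on {\<sigma><..} f3"
    and f1_flat: "\<forall>s. 0 \<le> s \<and> s \<le> \<sigma> \<longrightarrow> f1 s = 0"
    and f2_pos: "\<forall>s>\<sigma>. f2 s > 0"
    and f_deriv: "\<forall>x\<ge>0. (f has_real_derivative f1 x) (at x within {0..})"
    and f_zero: "f 0 = 0"
    and f_superlin: "filterlim (\<lambda>s. f s / s) at_top at_top"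
    and delta_pos: "\<And>n. \<delta> n > 0"
    and delta_le: "\<And>n. \<delta> n \<le> 1 / (real n + 1)"
    and delta_f1: "\<And>n. f1 (\<sigma> + 2 * \<delta> n) \<le> exp (-(real n + 1)/\<sigma>) * (1 - exp (-1/(\<sigma>+2)))"
begin

lemma f1_zero: "0 \<le> s \<Longrightarrow> s \<le> \<sigma> \<Longrightarrow> f1 s = 0"
  using f1_flat by blast

lemma f2_isCont: "x > \<sigma> \<Longrightarrow> isCont f2 x"
  using f2_deriv DERIV_isCont by blast

lemma f1_isCont: "x > \<sigma> \<Longrightarrow> isCont f1 x"
  using f1_deriv DERIV_isCont by blast

lemma f2_cont_on: "continuous_on {\<sigma><..} f2"
  using f2_isCont continuous_at_imp_continuous_on by blast

lemma f1_cont_on: "continuous_on {\<sigma><..} f1"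
  using f1_isCont continuous_at_imp_continuous_on by blast

lemma f1_mono_aux: "\<sigma> \<le> x \<Longrightarrow> x \<le> y \<Longrightarrow> f1 x \<le> f1 y"
proof -
  assume xy: "\<sigma> \<le> x" "x \<le> y"
  show "f1 x \<le> f1 y"
  proof (rule DERIV_nonneg_imp_increasing_open[OF xy(2)])
    fix t assume "x < t" "t < y"
    then show "\<exists>y. DERIV f1 t :> y \<and> 0 \<le> y"
      using f1_deriv f2_pos xy by (intro exI[of _ "f2 t"]) (auto intro: less_imp_le)
  next
    show "continuous_on {x..y} f1"
      by (rule continuous_on_subset[OF f1_cont]) (use xy sigma_pos in auto)
  qed
qed

lemma f1_mono: "0 \<le> x \<Longrightarrow> x \<le> y \<Longrightarrow> f1 x \<le> f1 y"
proof -
  assume xy: "0 \<le> x" "x \<le> y"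
  show "f1 x \<le> f1 y"
  proof (cases "x \<le> \<sigma>")
    case True
    then have "f1 x = f1 \<sigma>" using f1_zero xy sigma_pos by simp
    moreover have "f1 \<sigma> \<le> f1 y"
    proof (cases "y \<le> \<sigma>")
      case True then show ?thesis using f1_zero xy sigma_pos by simp
    next
      case False then show ?thesis using f1_mono_aux[of \<sigma> y] by simp
    qed
    ultimately show ?thesis by simp
  next
    case False then show ?thesis using f1_mono_aux xy by simp
  qed
qed

lemma f1_nonneg: "0 \<le> x \<Longrightarrow> f1 x \<ge> 0"
  using f1_mono[of 0 x] f1_zero[of 0] sigma_pos by simp

lemma f1_pos: "x > \<sigma> \<Longrightarrow> f1 x > 0"
proof -
  assume x: "x > \<sigma>"
  have "f1 \<sigma> < f1 x"
  proof (rule DERIV_pos_imp_increasing_open[OF x])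
    fix t assume "\<sigma> < t" "t < x"
    then show "\<exists>y. DERIV f1 t :> y \<and> 0 < y"
      using f1_deriv f2_pos by blast
  next
    show "continuous_on {\<sigma>..x} f1"
      by (rule continuous_on_subset[OF f1_cont]) (use sigma_pos in auto)
  qed
  then show ?thesis using f1_zero[of \<sigma>] sigma_pos by simp
qed

lemma a_small:
  assumes amono: "\<sigma>' > \<sigma>" "mono_on {\<sigma>..\<sigma>'} (a_fun \<sigma> f1 f2)"
    and e: "\<epsilon> > 0"
  shows "\<exists>\<eta>>0. \<forall>s. \<sigma> < s \<and> s \<le> \<sigma> + \<eta> \<longrightarrow> f1 s / (s * f2 s) < \<epsilon>"
proof (rule ccontr)
  assume "\<not> ?thesis"
  then have H: "\<forall>\<eta>>0. \<exists>s. \<sigma> < s \<and> s \<le> \<sigma> + \<eta> \<and> f1 s / (s * f2 s) \<ge> \<epsilon>"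
    using not_less by blast
  have big: "f1 t / (t * f2 t) \<ge> \<epsilon>" if t: "\<sigma> < t" "t \<le> \<sigma>'" for t
  proof -
    obtain s where s: "\<sigma> < s" "s \<le> t" "f1 s / (s * f2 s) \<ge> \<epsilon>"
      using H[rule_format, of "t - \<sigma>"] t by auto
    have "a_fun \<sigma> f1 f2 s \<le> a_fun \<sigma> f1 f2 t"
      using amono(2) s t by (intro mono_onD[OF amono(2)]) auto
    then show ?thesis using s t by (simp add: a_fun_def)
  qed
  define M where "M = 1 / (\<epsilon> * \<sigma>)"
  have ratio: "f2 t / f1 t \<le> M" if t: "\<sigma> < t" "t \<le> \<sigma>'" for t
  proof -
    have p: "f1 t > 0" "f2 t > 0" "t > 0" using f1_pos f2_pos t sigma_pos by auto
    have "\<epsilon> * (t * f2 t) \<le> f1 t" using big[OF t] p by (simp add: le_divide_eq)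
    moreover have "\<epsilon> * (\<sigma> * f2 t) \<le> \<epsilon> * (t * f2 t)" using p e t by (intro mult_left_mono) auto
    ultimately have "\<epsilon> * \<sigma> * f2 t \<le> f1 t" by (simp add: mult.assoc)
    then show ?thesis unfolding M_def using p e sigma_pos by (simp add: field_simps)
  qed
  define c0 where "c0 = ln (f1 \<sigma>') - (\<sigma>' - \<sigma>) * M"
  have lower: "f1 t \<ge> exp c0" if t: "\<sigma> < t" "t < \<sigma>'" for t
  proof -
    have "\<exists>z. t < z \<and> z < \<sigma>' \<and> ln (f1 \<sigma>') - ln (f1 t) = (\<sigma>' - t) * (f2 z / f1 z)"
    proof (rule MVT2)
      show "t < \<sigma>'" using t by simp
      fix x assume "t \<le> x" "x \<le> \<sigma>'"
      then have x: "x > \<sigma>" using t by simp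
      show "((\<lambda>x. ln (f1 x)) has_real_derivative f2 x / f1 x) (at x)"
        using f1_deriv x f1_pos[OF x]
        by (auto intro!: derivative_eq_intros simp: field_simps)
    qed
    then obtain z where z: "t < z" "z < \<sigma>'" "ln (f1 \<sigma>') - ln (f1 t) = (\<sigma>' - t) * (f2 z / f1 z)"
      by blast
    have "(\<sigma>' - t) * (f2 z / f1 z) \<le> (\<sigma>' - \<sigma>) * M"
    proof (rule mult_mono)
      show "f2 z / f1 z \<le> M" using ratio z t by simp
      show "0 \<le> f2 z / f1 z" using f1_pos f2_pos z t by (simp add: less_imp_le)
    qed (use t in auto)
    then have "ln (f1 t) \<ge> c0" using z unfolding c0_def by simp
    then show ?thesis using f1_pos t by (metis exp_le_cancel_iff exp_ln)
  qed
  have "(f1 \<longlongrightarrow> f1 \<sigma>) (at \<sigma> within {0..})"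
    using f1_cont sigma_pos by (simp add: continuous_on_def)
  then have "(f1 \<longlongrightarrow> 0) (at_right \<sigma>)"
    using f1_zero[of \<sigma>] sigma_pos
    by (auto elim!: tendsto_mono[rotated] intro!: at_le)
  moreover have "eventually (\<lambda>t. f1 t \<ge> exp c0) (at_right \<sigma>)"
  proof -
    have "eventually (\<lambda>t. t \<in> {\<sigma><..<\<sigma>'}) (at_right \<sigma>)"
      using amono by (intro eventually_at_right_real) auto
    then show ?thesis by eventually_elim (use lower in auto)
  qed
  ultimately have "0 \<ge> exp c0"
    by (intro tendsto_lowerbound[of f1 0 "at_right \<sigma>" "exp c0"]) auto
  then show False by simp
qed

definition "P d s = thc \<sigma> d s * f1 s"
definition "P1 d s = th1c \<sigma> d s * f1 s + thc \<sigma> d s * f2 s"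
definition "P2 d s = th2c \<sigma> d s * f1 s + 2 * th1c \<sigma> d s * f2 s + thc \<sigma> d s * f3 s"

lemma P_deriv: assumes d: "d > 0" shows "(P d has_real_derivative P1 d x) (at x)"
proof (cases "x > \<sigma>")
  case True
  then show ?thesis unfolding P_def[abs_def] P1_def
    using thc_deriv[OF d] f1_deriv
    by (auto intro!: derivative_eq_intros)
next
  case False
  have "((\<lambda>_. 0) has_real_derivative 0) (at x)" by simp
  then have "(P d has_real_derivative 0) (at x)"
    by (rule has_field_derivative_transform_within_open[where S="{..<\<sigma>+d}"])
       (use False d in \<open>auto simp: P_def thc_zero\<close>)
  moreover have "P1 d x = 0" using False d by (simp add: P1_def thc_zero)
  ultimately show ?thesis by simp
qed

lemma P1_deriv: assumes d: "d > 0" shows "(P1 d has_real_derivative P2 d x) (at x)"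
proof (cases "x > \<sigma>")
  case True
  then show ?thesis unfolding P1_def[abs_def] P2_def
    using thc_deriv[OF d] th1c_deriv[OF d] f1_deriv f2_deriv
    by (auto intro!: derivative_eq_intros simp: algebra_simps)
next
  case False
  have "((\<lambda>_. 0) has_real_derivative 0) (at x)" by simp
  then have "(P1 d has_real_derivative 0) (at x)"
    by (rule has_field_derivative_transform_within_open[where S="{..<\<sigma>+d}"])
       (use False d in \<open>auto simp: P1_def thc_zero\<close>)
  moreover have "P2 d x = 0" using False d by (simp add: P2_def thc_zero)
  ultimately show ?thesis by simp
qed

lemma P_cont: assumes d: "d > 0" shows "continuous_on UNIV (P d)"
  using P_deriv[OF d] DERIV_isCont continuous_at_imp_continuous_on by blast

lemma P2_cont: assumes d: "d > 0" shows "continuous_on UNIV (P2 d)"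
proof -
  have "continuous_on ({\<sigma><..} \<union> {..<\<sigma>+d}) (P2 d)"
  proof (rule continuous_on_open_Un)
    show "continuous_on {\<sigma><..} (P2 d)" unfolding P2_def[abs_def]
      using th2c_cont[OF d] th1c_cont[OF d] thc_cont[OF d] f1_cont_on f2_cont_on f3_cont
      by (intro continuous_intros; blast intro: continuous_on_subset)
    have "continuous_on {..<\<sigma>+d} (\<lambda>_. 0::real)" by simp
    then show "continuous_on {..<\<sigma>+d} (P2 d)"
      by (rule continuous_on_cong[THEN iffD1, rotated 2]) (use d in \<open>auto simp: P2_def thc_zero\<close>)
  qed auto
  moreover have "{\<sigma><..} \<union> {..<\<sigma>+d} = UNIV" using d by auto
  ultimately show ?thesis by simp
qed

definition "mm n = exp (-(real n + 1)/\<sigma>) * (1 - exp (-1/(\<sigma>+2)))"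
definition "G1 n s = P (\<delta> n) s + hh (real n + 1) s"
definition "G2 n s = P1 (\<delta> n) s + hh1 (real n + 1) s"
definition "G3 n s = P2 (\<delta> n) s + hh2 (real n + 1) s"
definition "G n x = integral {-1..x} (G1 n)"

lemma delta_le1: "\<delta> n \<le> 1"
  using delta_le[of n] by (smt (verit) divide_le_eq_1_pos of_nat_0_le_iff)

lemma G1_cont: "continuous_on UNIV (G1 n)"
  unfolding G1_def[abs_def]
  using P_cont[OF delta_pos] hh_cont[of "real n + 1"] by (intro continuous_intros) auto

lemma G1_deriv: "x > 0 \<Longrightarrow> (G1 n has_real_derivative G2 n x) (at x)"
  unfolding G1_def[abs_def] G2_def
  using P_deriv[OF delta_pos] hh_deriv by (auto intro!: derivative_eq_intros)

lemma G2_deriv: "x > 0 \<Longrightarrow> (G2 n has_real_derivative G3 n x) (at x)"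
  unfolding G2_def[abs_def] G3_def
  using P1_deriv[OF delta_pos] hh1_deriv by (auto intro!: derivative_eq_intros)

lemma G3_cont: "continuous_on {0<..} (G3 n)"
  unfolding G3_def[abs_def]
  using P2_cont[OF delta_pos] hh2_cont
  by (intro continuous_intros) (auto intro: continuous_on_subset)

lemma G1_nonpos: "s \<le> 0 \<Longrightarrow> G1 n s = 0"
  using delta_pos[of n] sigma_pos by (simp add: G1_def P_def thc_zero hh_nonpos)

lemma G_small: "s \<le> \<sigma> \<Longrightarrow> G1 n s = hh (real n + 1) s \<and> G2 n s = hh1 (real n + 1) s"
  using delta_pos[of n] sigma_pos by (simp add: G1_def G2_def P_def P1_def thc_zero)

lemma G_big: "s \<ge> \<sigma> + 2 * \<delta> n \<Longrightarrow> G1 n s = f1 s + hh (real n + 1) s \<and> G2 n s = f2 s + hh1 (real n + 1) s"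
  using delta_pos[of n] sigma_pos by (simp add: G1_def G2_def P_def P1_def thc_one)

lemma G2_pos: "x > 0 \<Longrightarrow> G2 n x > 0"
proof -
  assume x: "x > 0"
  have a: "th1c \<sigma> (\<delta> n) x * f1 x \<ge> 0"
    using th1c_range[OF delta_pos] f1_nonneg x by simp
  have b: "thc \<sigma> (\<delta> n) x * f2 x \<ge> 0"
  proof (cases "x > \<sigma>")
    case True then show ?thesis using thc_range(1) f2_pos by (simp add: less_imp_le)
  next
    case False then show ?thesis using thc_zero[OF delta_pos] sigma_pos delta_pos[of n] by simp
  qed
  have "hh1 (real n + 1) x > 0" using x by (intro hh1_pos) auto
  then show ?thesis using a b by (simp add: G2_def P1_def)
qed

end



lemma integral_deriv_at:
  fixes g :: "real \<Rightarrow> real"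
  assumes "continuous_on UNIV g" "a < x"
  shows "((\<lambda>y. integral {a..y} g) has_real_derivative g x) (at x)"
proof -
  have "((\<lambda>y. integral {a..y} g) has_real_derivative g x) (at x within {a..x+1})"
    by (rule integral_has_real_derivative) (use assms in \<open>auto intro: continuous_on_subset\<close>)
  moreover have "at x within {a..x+1} = at x" using assms by (intro at_within_interior) auto
  ultimately show ?thesis by simp
qed

context L begin

lemma G_deriv: "x > -1 \<Longrightarrow> (G n has_real_derivative G1 n x) (at x)"
  unfolding G_def[abs_def] by (rule integral_deriv_at[OF G1_cont])

lemma G_zero: "G n 0 = 0"
proof -
  have "(G1 n has_integral 0) {-1..0}"
    by (rule has_integral_eq[where f="\<lambda>_. 0", OF _ has_integral_0]) (simp add: G1_nonpos)
  then show ?thesis unfolding G_def by (simp add: integral_unique)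
qed

lemma G_eq: "x \<ge> 0 \<Longrightarrow> G n x = integral {0..x} (G1 n)"
proof -
  assume x: "x \<ge> 0"
  have "integral {-1..0} (G1 n) + integral {0..x} (G1 n) = integral {-1..x} (G1 n)"
    by (rule Henstock_Kurzweil_Integration.integral_combine) (use x G1_cont in \<open>auto intro: integrable_continuous_interval continuous_on_subset\<close>)
  moreover have "integral {-1..0} (G1 n) = 0"
    using G_zero unfolding G_def by simp
  ultimately show ?thesis unfolding G_def by simp
qed

lemma f_eq: "x \<ge> 0 \<Longrightarrow> f x = integral {0..x} f1"
proof -
  assume x: "x \<ge> 0"
  have "(f1 has_integral (f x - f 0)) {0..x}"
  proof (rule fundamental_theorem_of_calculus[OF x])
    fix t assume "t \<in> {0..x}"
    then have "(f has_real_derivative f1 t) (at t within {0..})" using f_deriv by auto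
    then have "(f has_real_derivative f1 t) (at t within {0..x})" by (rule DERIV_subset) auto
    then show "(f has_vector_derivative f1 t) (at t within {0..x})"
      by (simp add: has_real_derivative_iff_has_vector_derivative)
  qed
  then show ?thesis using f_zero by (simp add: integral_unique)
qed

lemma G1_mono_s: "0 \<le> x \<Longrightarrow> x \<le> y \<Longrightarrow> G1 n x \<le> G1 n y"
proof -
  assume xy: "0 \<le> x" "x \<le> y"
  show ?thesis
  proof (rule DERIV_nonneg_imp_increasing_open[OF xy(2)])
    fix t assume "x < t" "t < y"
    then have "t > 0" using xy by simp
    then show "\<exists>y. DERIV (G1 n) t :> y \<and> 0 \<le> y"
      using G1_deriv G2_pos by (blast intro: less_imp_le)
  next
    show "continuous_on {x..y} (G1 n)" using G1_cont by (rule continuous_on_subset) auto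
  qed
qed

lemma G_convex: "convex_on {0..} (G n)"
proof (rule convex_on_realI[where f'="G1 n"])
  show "connected {0::real..}" by simp
  fix x assume "x \<in> {0::real..}"
  then show "(G n has_real_derivative G1 n x) (at x)" by (intro G_deriv) auto
next
  fix x y :: real assume "x \<in> {0..}" "y \<in> {0..}" "x \<le> y"
  then show "G1 n x \<le> G1 n y" by (intro G1_mono_s) auto
qed

lemma G1_mono_n: "x \<ge> 0 \<Longrightarrow> G1 (Suc n) x \<le> G1 n x"
proof -
  assume x0: "x \<ge> 0"
  define k where "k = real n + 1"
  have k: "k > 0" "real (Suc n) + 1 = k + 1" unfolding k_def by auto
  have hk: "hh (k+1) x \<le> hh k x" using k by (intro hh_mono_k) auto
  have th: "0 \<le> thc \<sigma> d x" "thc \<sigma> d x \<le> 1" for d using thc_range by auto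
  have f1x: "f1 x \<ge> 0" using f1_nonneg x0 by simp
  have ge: "G1 n x \<ge> hh k x"
    using th f1x unfolding G1_def P_def k_def by (simp add: mult_nonneg_nonneg)
  have up: "G1 (Suc n) x \<le> f1 x + hh (k+1) x"
    using th[of "\<delta> (Suc n)"] f1x unfolding G1_def P_def k(2) by (simp add: mult_left_le_one_le)
  consider "x \<le> \<sigma>" | "x \<ge> \<sigma> + 2 * \<delta> n" | "\<sigma> < x \<and> x < \<sigma> + 2 * \<delta> n" by linarith
  then show ?thesis
  proof cases
    case 1
    then show ?thesis using G_small[OF 1, of n] G_small[OF 1, of "Suc n"] hk k(2) k_def by simp
  next
    case 2
    then show ?thesis using G_big[OF 2] up hk k_def by simp
  next
    case 3
    have "f1 x \<le> f1 (\<sigma> + 2 * \<delta> n)" using 3 x0 by (intro f1_mono) auto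
    also have "\<dots> \<le> mm n" using delta_f1[of n] by (simp add: mm_def)
    also have "\<dots> \<le> hh k x - hh (k+1) x"
      unfolding mm_def k_def
      using hh_gap[of \<sigma> x "real n + 1"] 3 sigma_pos delta_le1[of n] by simp
    finally show ?thesis using up ge by simp
  qed
qed

lemma G1_lower: "x \<ge> 0 \<Longrightarrow> G1 n x \<ge> f1 x - f1 (\<sigma> + 2)"
proof -
  assume x0: "x \<ge> 0"
  have f1x: "f1 x \<ge> 0" using f1_nonneg x0 by simp
  have ge: "G1 n x \<ge> thc \<sigma> (\<delta> n) x * f1 x"
    unfolding G1_def P_def using hh_nonneg by simp
  show ?thesis
  proof (cases "x \<ge> \<sigma> + 2 * \<delta> n")
    case True
    have "0 \<le> hh (real n + 1) x" "0 \<le> f1 (\<sigma>+2)" using hh_nonneg f1_nonneg[of "\<sigma>+2"] sigma_pos by auto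
    then show ?thesis using G_big[OF True] by simp
  next
    case False
    then have "f1 x \<le> f1 (\<sigma> + 2)" using x0 delta_le1[of n] by (intro f1_mono) auto
    moreover have "0 \<le> thc \<sigma> (\<delta> n) x * f1 x" using thc_range f1x by simp
    ultimately show ?thesis using ge by simp
  qed
qed

lemma G_superlin: "filterlim (\<lambda>s. G n s / s) at_top at_top"
proof -
  define M where "M = f1 (\<sigma> + 2)"
  have "filterlim (\<lambda>s. - M + f s / s) at_top at_top"
    by (rule filterlim_tendsto_add_at_top[OF tendsto_const f_superlin])
  moreover have "eventually (\<lambda>s. - M + f s / s \<le> G n s / s) at_top"
    using eventually_gt_at_top[of 0]
  proof eventually_elim
    case (elim x)
    have int1: "G1 n integrable_on {0..x}" "f1 integrable_on {0..x}"
      by (rule integrable_continuous_interval, rule continuous_on_subset[OF G1_cont], simp)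
         (rule integrable_continuous_interval, rule continuous_on_subset[OF f1_cont], auto)
    have "integral {0..x} (\<lambda>s. f1 s - M) \<le> integral {0..x} (G1 n)"
      using int1 G1_lower unfolding M_def by (intro integral_le integrable_diff integrable_const_ivl) auto
    moreover have "integral {0..x} (\<lambda>s. f1 s - M) = f x - x * M"
      using int1 f_eq[of x] elim by (simp add: integral_diff integrable_const_ivl)
    ultimately have "f x - x * M \<le> G n x" using G_eq[of x] elim by simp
    then have "(f x - x * M) / x \<le> G n x / x" by (rule divide_right_mono) (use elim in auto)
    moreover have "(f x - x * M) / x = - M + f x / x" using elim by (simp add: field_simps)
    ultimately show ?case by simp
  qed
  ultimately show ?thesis by (rule filterlim_at_top_mono)
qed

lemma G_lim0a: "((\<lambda>s. (s * G2 n s - G1 n s) / s^3) \<longlongrightarrow> 0) (at_right 0)"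
proof (rule Lim_null_comparison)
  define k where "k = real n + 1"
  have k: "k > 0" unfolding k_def by simp
  show "\<forall>\<^sub>F s in at_right 0. norm ((s * G2 n s - G1 n s) / s^3) \<le> 3125 * (s / k^4 + s^2 / k^5)"
    using eventually_at_right_real[OF sigma_pos]
  proof eventually_elim
    case (elim s)
    then have "s \<le> \<sigma>" "s > 0" by auto
    then show ?case using G_small[of s n] hh_cubic_bound[OF k, of s] unfolding k_def by simp
  qed
  show "((\<lambda>s. 3125 * (s / k^4 + s^2 / k^5)) \<longlongrightarrow> 0) (at_right 0)"
    using k by (auto intro!: tendsto_eq_intros)
qed

lemma G_lim0b: "((\<lambda>s. G1 n s / s) \<longlongrightarrow> 0) (at_right 0)"
proof (rule Lim_null_comparison)
  define k where "k = real n + 1"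
  have k: "k > 0" unfolding k_def by simp
  show "\<forall>\<^sub>F s in at_right 0. norm (G1 n s / s) \<le> 3125 * s^4 / k^5"
    using eventually_at_right_real[OF sigma_pos]
  proof eventually_elim
    case (elim s)
    then have "s \<le> \<sigma>" "s > 0" by auto
    then show ?case using G_small[of s n] hh_div_bound[OF k, of s] hh_nonneg[of k s] unfolding k_def by simp
  qed
  show "((\<lambda>s. 3125 * s^4 / k^5) \<longlongrightarrow> 0) (at_right 0)"
    using k by (auto intro!: tendsto_eq_intros)
qed

end



lemma lim_pow: "(\<lambda>n. C / (real n + 1)^Suc p) \<longlonglongrightarrow> 0"
proof -
  have "(\<lambda>n. 1 / (real n + 1)) \<longlonglongrightarrow> 0" by real_asymp
  then have "(\<lambda>n. (1 / (real n + 1))^Suc p) \<longlonglongrightarrow> 0^Suc p" by (intro tendsto_power)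
  then have "(\<lambda>n. C * (1 / (real n + 1))^Suc p) \<longlonglongrightarrow> C * 0" by (intro tendsto_mult) auto
  then show ?thesis by (simp add: power_divide)
qed

lemma unif_bound:
  fixes G :: "nat \<Rightarrow> real \<Rightarrow> real"
  assumes "eventually (\<lambda>n. \<forall>x\<in>K. \<bar>G n x - g x\<bar> \<le> b n) sequentially" "b \<longlonglongrightarrow> 0"
  shows "uniform_limit K G g sequentially"
proof (rule uniform_limitI)
  fix e :: real assume e: "e > 0"
  have "eventually (\<lambda>n. b n < e) sequentially" using assms(2) e by (rule order_tendstoD(2))
  with assms(1) show "eventually (\<lambda>n. \<forall>x\<in>K. dist (G n x) (g x) < e) sequentially"
    by eventually_elim (force simp: dist_real_def)
qed

lemma compact_bound_R:
  fixes K :: "real set"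
  assumes "compact K"
  obtains R where "R \<ge> 0" "\<And>x. x \<in> K \<Longrightarrow> x \<le> R"
proof -
  obtain a where "\<forall>x\<in>K. \<bar>x\<bar> \<le> a" using compact_imp_bounded[OF assms] bounded_real by blast
  then show ?thesis using that[of "max a 0"] by fastforce
qed

lemma compact_lower:
  fixes K :: "real set"
  assumes "compact K" "K \<subseteq> {a<..}"
  obtains c where "c > a" "\<And>x. x \<in> K \<Longrightarrow> c \<le> x"
proof (cases "K = {}")
  case True then show ?thesis using that[of "a+1"] by auto
next
  case False
  then obtain s where "s \<in> K" "\<forall>t\<in>K. s \<le> t" using compact_attains_inf[OF assms(1)] by blast
  then show ?thesis using that[of s] assms(2) by auto
qed

lemma compact_pos_min:
  fixes K :: "real set" and g :: "real \<Rightarrow> real"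
  assumes "compact K" "continuous_on K g" "\<And>x. x \<in> K \<Longrightarrow> g x > 0"
  obtains m where "m > 0" "\<And>x. x \<in> K \<Longrightarrow> m \<le> g x"
proof (cases "K = {}")
  case True then show ?thesis using that[of 1] by auto
next
  case False
  then obtain s where "s \<in> K" "\<forall>t\<in>K. g s \<le> g t" using continuous_attains_inf[OF assms(1) False assms(2)] by blast
  then show ?thesis using that[of "g s"] assms(3) by auto
qed

lemma alg_a:
  fixes f1 f2 h h' x c m A B B' :: real
  assumes "f1 \<ge> 0" "f2 \<ge> m" "m > 0" "x \<ge> c" "c > 0" "0 \<le> h" "h \<le> B" "0 \<le> h'" "h' \<le> B'" "f1 \<le> A"
  shows "\<bar>(f1 + h) / (x * (f2 + h')) - f1 / (x * f2)\<bar> \<le> B / (c * m) + A * B' / (c * m^2)"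
proof -
  have p: "f2 > 0" "x > 0" "f2 + h' > 0" using assms by auto
  have eq: "(f1 + h) / (x * (f2 + h')) - f1 / (x * f2) = h / (x * (f2 + h')) - f1 * h' / (x * f2 * (f2 + h'))"
  proof -
    have d: "x * (f2 + h') \<noteq> 0" "x * f2 \<noteq> 0" "x * f2 * (f2 + h') \<noteq> 0" using p by auto
    show ?thesis using d by ((simp add: divide_simps; simp add: algebra_simps) | (simp add: field_simps; simp add: algebra_simps) | (auto simp: divide_simps algebra_simps))
  qed
  have t1: "h / (x * (f2 + h')) \<le> B / (c * m)"
  proof -
    have "c * m \<le> x * (f2 + h')" using assms by (intro mult_mono) auto
    then have "h / (x * (f2 + h')) \<le> h / (c * m)" using assms by (intro divide_left_mono) auto
    also have "\<dots> \<le> B / (c * m)" using assms by (intro divide_right_mono) auto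
    finally show ?thesis .
  qed
  have t2: "f1 * h' / (x * f2 * (f2 + h')) \<le> A * B' / (c * m^2)"
  proof -
    have "c * m \<le> x * f2" using assms by (intro mult_mono) auto
    then have "(c * m) * m \<le> (x * f2) * (f2 + h')" using assms by (intro mult_mono) auto
    then have "c * m^2 \<le> x * f2 * (f2 + h')" by (simp add: power2_eq_square mult.assoc)
    then have "f1 * h' / (x * f2 * (f2 + h')) \<le> f1 * h' / (c * m^2)" using assms
      by (intro divide_left_mono) auto
    also have "\<dots> \<le> A * B' / (c * m^2)" using assms by (intro divide_right_mono mult_mono) auto
    finally show ?thesis .
  qed
  have n1: "h / (x * (f2 + h')) \<ge> 0" "f1 * h' / (x * f2 * (f2 + h')) \<ge> 0" using assms p by auto
  show ?thesis unfolding eq using t1 t2 n1 by linarith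
qed

lemma alg_b:
  fixes f2 h' x m R B' :: real
  assumes "f2 \<ge> m" "m > 0" "0 \<le> x" "x \<le> R" "0 \<le> h'" "h' \<le> B'"
  shows "\<bar>x^2 / (f2 + h') - x^2 / f2\<bar> \<le> R^2 * B' / m^2"
proof -
  have p: "f2 > 0" "f2 + h' > 0" using assms by auto
  have eq: "x^2 / (f2 + h') - x^2 / f2 = - (x^2 * h' / (f2 * (f2 + h')))"
    using p by (simp add: field_simps)
  have "m^2 \<le> f2 * (f2 + h')" unfolding power2_eq_square using assms by (intro mult_mono) auto
  then have "x^2 * h' / (f2 * (f2 + h')) \<le> x^2 * h' / m^2" using assms
    by (intro divide_left_mono) auto
  also have "\<dots> \<le> R^2 * B' / m^2" using assms by (intro divide_right_mono mult_mono power_mono) auto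
  finally show ?thesis unfolding eq using assms p by simp
qed

lemma ev_small: "c > 0 \<Longrightarrow> eventually (\<lambda>n. C / (real n + 1)^Suc p < c) sequentially"
  using lim_pow[of C p] by (rule order_tendstoD(2))

context L begin

lemma mm_nonneg: "mm n \<ge> 0"
  unfolding mm_def using sigma_pos by simp

lemma mm_lim: "mm \<longlonglongrightarrow> 0"
proof (rule Lim_null_comparison)
  define c where "c = 1 - exp (-1/(\<sigma>+2))"
  have c: "0 \<le> c" "c \<le> 1" unfolding c_def using sigma_pos by auto
  show "\<forall>\<^sub>F n in sequentially. norm (mm n) \<le> \<sigma> / (real n + 1)^Suc 0"
  proof (intro always_eventually allI)
    fix n
    have "(real n + 1)/\<sigma> \<le> exp ((real n + 1)/\<sigma>)" using exp_ge_add_one_self[of "(real n + 1)/\<sigma>"] by linarith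
    moreover have "exp (-(real n + 1)/\<sigma>) = 1 / exp ((real n + 1)/\<sigma>)"
      using exp_minus[of "(real n + 1)/\<sigma>"] by (simp add: inverse_eq_divide minus_divide_left)
    moreover have "1 / exp ((real n + 1)/\<sigma>) \<le> 1 / ((real n + 1)/\<sigma>)"
      using \<open>(real n + 1)/\<sigma> \<le> exp ((real n + 1)/\<sigma>)\<close> sigma_pos
      by (intro divide_left_mono) auto
    ultimately have "exp (-(real n + 1)/\<sigma>) \<le> \<sigma> / (real n + 1)"
      by simp
    moreover have "mm n \<le> exp (-(real n + 1)/\<sigma>)" unfolding mm_def c_def[symmetric]
      using c by (simp add: mult_left_le_one_le)
    ultimately show "norm (mm n) \<le> \<sigma> / (real n + 1)^Suc 0" using mm_nonneg[of n] by simp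
  qed
  show "(\<lambda>n. \<sigma> / (real n + 1)^Suc 0) \<longlonglongrightarrow> 0" by (rule lim_pow)
qed

lemma G1_err:
  assumes "0 \<le> t" "t \<le> R"
  shows "\<bar>G1 n t - f1 t\<bar> \<le> mm n + 3125 * R^5 / (real n + 1)^5"
proof -
  define k where "k = real n + 1"
  have k: "k > 0" unfolding k_def by simp
  have th: "0 \<le> thc \<sigma> (\<delta> n) t" "thc \<sigma> (\<delta> n) t \<le> 1" using thc_range by auto
  have f1t: "f1 t \<ge> 0" using f1_nonneg assms by simp
  have eq: "G1 n t - f1 t = hh k t - (1 - thc \<sigma> (\<delta> n) t) * f1 t"
    unfolding G1_def P_def k_def by (simp add: algebra_simps)
  have a: "(1 - thc \<sigma> (\<delta> n) t) * f1 t \<le> mm n"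
  proof (cases "t \<ge> \<sigma> + 2 * \<delta> n")
    case True then show ?thesis using thc_one[OF delta_pos True] mm_nonneg by simp
  next
    case False
    then have "f1 t \<le> f1 (\<sigma> + 2 * \<delta> n)" using assms by (intro f1_mono) auto
    also have "\<dots> \<le> mm n" using delta_f1[of n] by (simp add: mm_def)
    moreover have "(1 - thc \<sigma> (\<delta> n) t) * f1 t \<le> 1 * f1 t"
      by (rule mult_right_mono) (use th f1t in auto)
    ultimately show ?thesis by simp
  qed
  have a0: "(1 - thc \<sigma> (\<delta> n) t) * f1 t \<ge> 0" using th f1t by simp
  have b: "hh k t \<le> 3125 * R^5 / k^5"
  proof (cases "t > 0")
    case True
    have "hh k t \<le> 3125 * t^5 / k^5" by (rule hh_bound[OF k True])
    also have "\<dots> \<le> 3125 * R^5 / k^5" using assms k by (intro divide_right_mono mult_left_mono power_mono) auto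
    finally show ?thesis .
  next
    case False then show ?thesis using hh_nonpos[of t k] assms k by simp
  qed
  have b0: "hh k t \<ge> 0" by (rule hh_nonneg)
  show ?thesis using a a0 b b0 unfolding eq k_def[symmetric] by linarith
qed

lemma G1_unif: "compact K \<Longrightarrow> K \<subseteq> {0..} \<Longrightarrow> uniform_limit K G1 f1 sequentially"
proof -
  assume K: "compact K" "K \<subseteq> {0..}"
  obtain R where R: "R \<ge> 0" "\<And>x. x \<in> K \<Longrightarrow> x \<le> R" using compact_bound_R[OF K(1)] by blast
  show ?thesis
  proof (rule unif_bound)
    show "\<forall>\<^sub>F n in sequentially. \<forall>x\<in>K. \<bar>G1 n x - f1 x\<bar> \<le> mm n + 3125 * R^5 / (real n + 1)^5"
      using G1_err R K by (intro always_eventually) auto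
    show "(\<lambda>n. mm n + 3125 * R^5 / (real n + 1)^5) \<longlonglongrightarrow> 0"
      using tendsto_add_zero[OF mm_lim lim_pow[of "3125 * R^5" 4]] by (simp add: eval_nat_numeral)
  qed
qed

lemma G_unif: "compact K \<Longrightarrow> K \<subseteq> {0..} \<Longrightarrow> uniform_limit K G f sequentially"
proof -
  assume K: "compact K" "K \<subseteq> {0..}"
  obtain R where R: "R \<ge> 0" "\<And>x. x \<in> K \<Longrightarrow> x \<le> R" using compact_bound_R[OF K(1)] by blast
  define b where "b n = mm n + 3125 * R^5 / (real n + 1)^5" for n
  show ?thesis
  proof (rule unif_bound)
    show "\<forall>\<^sub>F n in sequentially. \<forall>x\<in>K. \<bar>G n x - f x\<bar> \<le> b n * R"
    proof (intro always_eventually allI ballI)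
      fix n x assume x: "x \<in> K"
      then have x0: "0 \<le> x" "x \<le> R" using K R by auto
      have cG: "continuous_on {0..x} (G1 n)" using G1_cont by (rule continuous_on_subset) auto
      have cf: "continuous_on {0..x} f1" using f1_cont by (rule continuous_on_subset) auto
      have "G n x - f x = integral {0..x} (\<lambda>s. G1 n s - f1 s)"
        using G_eq[OF x0(1)] f_eq[OF x0(1)]
        by (simp add: integral_diff integrable_continuous_interval cG cf)
      moreover have "norm (integral {0..x} (\<lambda>s. G1 n s - f1 s)) \<le> b n * (x - 0)"
      proof (rule integral_bound)
        show "continuous_on {0..x} (\<lambda>s. G1 n s - f1 s)" using cG cf by (intro continuous_intros)
        fix t assume "t \<in> {0..x}"
        then show "norm (G1 n t - f1 t) \<le> b n" unfolding b_def using G1_err[of t R n] x0 by auto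
      qed (use x0 in auto)
      moreover have "b n * x \<le> b n * R"
        using x0 mm_nonneg[of n] R unfolding b_def by (intro mult_left_mono) auto
      ultimately show "\<bar>G n x - f x\<bar> \<le> b n * R" by simp
    qed
    have "b \<longlonglongrightarrow> 0" unfolding b_def
      using tendsto_add_zero[OF mm_lim lim_pow[of "3125 * R^5" 4]] by (simp add: eval_nat_numeral)
    then show "(\<lambda>n. b n * R) \<longlonglongrightarrow> 0" by (intro tendsto_mult_left_zero)
  qed
qed

lemma G_vi: "K \<subseteq> {0..<\<sigma>} \<Longrightarrow>
   uniform_limit K (\<lambda>n s. (s * G2 n s - G1 n s) / s^3) (\<lambda>s. 0) sequentially
 \<and> uniform_limit K (\<lambda>n s. G1 n s / s) (\<lambda>s. 0) sequentially"
proof -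
  assume K: "K \<subseteq> {0..<\<sigma>}"
  show ?thesis
  proof
    show "uniform_limit K (\<lambda>n s. (s * G2 n s - G1 n s) / s^3) (\<lambda>s. 0) sequentially"
    proof (rule unif_bound)
      show "\<forall>\<^sub>F n in sequentially. \<forall>x\<in>K. \<bar>(x * G2 n x - G1 n x) / x^3 - 0\<bar>
          \<le> 3125 * \<sigma> / (real n + 1)^4 + 3125 * \<sigma>^2 / (real n + 1)^5"
      proof (intro always_eventually allI ballI)
        fix n x assume "x \<in> K"
        then have x: "0 \<le> x" "x < \<sigma>" using K by auto
        have k: "real n + 1 > 0" by simp
        show "\<bar>(x * G2 n x - G1 n x) / x^3 - 0\<bar> \<le> 3125 * \<sigma> / (real n + 1)^4 + 3125 * \<sigma>^2 / (real n + 1)^5"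
        proof (cases "x = 0")
          case True then show ?thesis using sigma_pos by simp
        next
          case False
          then have xp: "x > 0" using x by simp
          have "\<bar>(x * G2 n x - G1 n x) / x^3\<bar> \<le> 3125 * (x / (real n + 1)^4 + x^2 / (real n + 1)^5)"
            using G_small[of x n] x hh_cubic_bound[OF k xp] by simp
          also have "\<dots> \<le> 3125 * (\<sigma> / (real n + 1)^4 + \<sigma>^2 / (real n + 1)^5)"
            using x xp by (intro mult_left_mono add_mono divide_right_mono power_mono) auto
          finally show ?thesis by (simp add: algebra_simps)
        qed
      qed
      show "(\<lambda>n. 3125 * \<sigma> / (real n + 1)^4 + 3125 * \<sigma>^2 / (real n + 1)^5) \<longlonglongrightarrow> 0"
        using tendsto_add_zero[OF lim_pow[of "3125 * \<sigma>" 3] lim_pow[of "3125 * \<sigma>^2" 4]]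
        by (simp add: eval_nat_numeral)
    qed
    show "uniform_limit K (\<lambda>n s. G1 n s / s) (\<lambda>s. 0) sequentially"
    proof (rule unif_bound)
      show "\<forall>\<^sub>F n in sequentially. \<forall>x\<in>K. \<bar>G1 n x / x - 0\<bar> \<le> 3125 * \<sigma>^4 / (real n + 1)^5"
      proof (intro always_eventually allI ballI)
        fix n x assume "x \<in> K"
        then have x: "0 \<le> x" "x < \<sigma>" using K by auto
        have k: "real n + 1 > 0" by simp
        show "\<bar>G1 n x / x - 0\<bar> \<le> 3125 * \<sigma>^4 / (real n + 1)^5"
        proof (cases "x = 0")
          case True then show ?thesis using sigma_pos by simp
        next
          case False
          then have xp: "x > 0" using x by simp
          have "\<bar>G1 n x / x\<bar> \<le> 3125 * x^4 / (real n + 1)^5"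
            using G_small[of x n] x hh_div_bound[OF k xp] hh_nonneg[of "real n + 1" x] xp by simp
          also have "\<dots> \<le> 3125 * \<sigma>^4 / (real n + 1)^5"
            using x xp by (intro mult_left_mono divide_right_mono power_mono) auto
          finally show ?thesis by simp
        qed
      qed
      show "(\<lambda>n. 3125 * \<sigma>^4 / (real n + 1)^5) \<longlonglongrightarrow> 0"
        using lim_pow[of "3125 * \<sigma>^4" 4] by (simp add: eval_nat_numeral)
    qed
  qed
qed

lemma delta_ev: "c > 0 \<Longrightarrow> eventually (\<lambda>n. 2 * \<delta> n < c) sequentially"
proof -
  assume c: "c > 0"
  have "eventually (\<lambda>n. 1 / (real n + 1)^Suc 0 < c/2) sequentially" using c by (intro ev_small) auto
  then show ?thesis
  proof eventually_elim
    case (elim n) then show ?case using delta_le[of n] by simp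
  qed
qed

lemma G_a:
  assumes am: "\<sigma>' > \<sigma>" "mono_on {\<sigma>..\<sigma>'} (a_fun \<sigma> f1 f2)" and K: "compact K" "K \<subseteq> {0<..}"
  shows "uniform_limit K (\<lambda>n s. G1 n s / (s * G2 n s)) (a_fun \<sigma> f1 f2) sequentially"
proof (rule uniform_limitI)
  fix e :: real assume e: "e > 0"
  obtain c where c: "c > 0" "\<And>x. x \<in> K \<Longrightarrow> c \<le> x" using compact_lower[OF K] by blast
  obtain R where R: "R \<ge> 0" "\<And>x. x \<in> K \<Longrightarrow> x \<le> R" using compact_bound_R[OF K(1)] by blast
  obtain \<eta> where eta: "\<eta> > 0" "\<And>s. \<sigma> < s \<Longrightarrow> s \<le> \<sigma> + \<eta> \<Longrightarrow> f1 s / (s * f2 s) < e/2"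
    using a_small[OF am, of "e/2"] e by auto
  define K2 where "K2 = K \<inter> {\<sigma>+\<eta>..}"
  have K2c: "compact K2" unfolding K2_def using K(1) by (intro compact_Int_closed) auto
  have K2s: "K2 \<subseteq> {\<sigma><..}" unfolding K2_def using eta by auto
  obtain m where m: "m > 0" "\<And>x. x \<in> K2 \<Longrightarrow> m \<le> f2 x"
  proof (rule compact_pos_min[OF K2c])
    show "continuous_on K2 f2" using f2_cont_on K2s by (rule continuous_on_subset)
    fix x assume "x \<in> K2" then show "f2 x > 0" using K2s f2_pos by auto
  qed blast
  define A where "A = f1 R"
  define bnd where "bnd n = 3125 * R^5 / (real n + 1)^5 / (c * m) + A * (3125 * R^3 / (real n + 1)^4) / (c * m^2)" for n
  have bnd_lim: "bnd \<longlonglongrightarrow> 0"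
  proof -
    have "(\<lambda>n. 3125 * R^5 / (c*m) / (real n + 1)^Suc 4 + 3125 * R^3 * A / (c * m^2) / (real n + 1)^Suc 3) \<longlonglongrightarrow> 0"
      by (intro tendsto_add_zero lim_pow)
    then show ?thesis unfolding bnd_def by (simp add: field_simps)
  qed
  have ev1: "eventually (\<lambda>n. 2 * \<delta> n < \<eta>) sequentially" using delta_ev[OF eta(1)] .
  have ev2: "eventually (\<lambda>n. R / (real n + 1)^Suc 0 < e/2) sequentially" using e by (intro ev_small) auto
  have ev3: "eventually (\<lambda>n. bnd n < e) sequentially" using bnd_lim e by (rule order_tendstoD(2))
  show "\<forall>\<^sub>F n in sequentially. \<forall>x\<in>K. dist (G1 n x / (x * G2 n x)) (a_fun \<sigma> f1 f2 x) < e"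
    using ev1 ev2 ev3
  proof eventually_elim
    case (elim n)
    define k where "k = real n + 1"
    have k: "k > 0" unfolding k_def by simp
    show ?case
    proof
      fix x assume xK: "x \<in> K"
      have x: "x > 0" "c \<le> x" "x \<le> R" using xK K c R by auto
      have G2p: "G2 n x > 0" using G2_pos x by simp
      show "dist (G1 n x / (x * G2 n x)) (a_fun \<sigma> f1 f2 x) < e"
      proof (cases "x \<le> \<sigma> + \<eta>")
        case True
        have a_b: "0 \<le> a_fun \<sigma> f1 f2 x" "a_fun \<sigma> f1 f2 x < e"
        proof -
          show "0 \<le> a_fun \<sigma> f1 f2 x" using f1_nonneg[of x] f2_pos x
            by (auto simp: a_fun_def intro!: divide_nonneg_pos)
          show "a_fun \<sigma> f1 f2 x < e"
          proof (cases "x > \<sigma>")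
            case True
            then have "f1 x / (x * f2 x) < e/2" using eta(2) \<open>x \<le> \<sigma> + \<eta>\<close> by simp
            moreover have "a_fun \<sigma> f1 f2 x = f1 x / (x * f2 x)" using True by (simp add: a_fun_def)
            ultimately show ?thesis using e by linarith
          next
            case False then show ?thesis using e by (simp add: a_fun_def)
          qed
        qed
        have th: "0 \<le> thc \<sigma> (\<delta> n) x" using thc_range by auto
        have h1: "thc \<sigma> (\<delta> n) x * f1 x \<le> e/2 * x * (thc \<sigma> (\<delta> n) x * f2 x)"
        proof (cases "x > \<sigma>")
          case True
          then have "f1 x / (x * f2 x) < e/2" using eta(2) \<open>x \<le> \<sigma> + \<eta>\<close> by simp
          then have "f1 x \<le> e/2 * (x * f2 x)" using x f2_pos True by (simp add: divide_less_eq less_imp_le)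
          then have "thc \<sigma> (\<delta> n) x * f1 x \<le> thc \<sigma> (\<delta> n) x * (e/2 * (x * f2 x))"
            using th by (rule mult_left_mono)
          then show ?thesis by (simp add: algebra_simps)
        next
          case False
          have "thc \<sigma> (\<delta> n) x = 0" by (rule thc_zero(1)) (use delta_pos[of n] False in auto)
          then show ?thesis by simp
        qed
        have h2: "hh k x \<le> e/2 * x * hh1 k x"
        proof -
          have "x / k \<le> R / k" using x k by (simp add: divide_right_mono)
          also have "\<dots> < e/2" using elim(2) unfolding k_def by simp
          finally have "x / k \<le> e/2" by simp
          then have "x * (x / k) * hh1 k x \<le> x * (e/2) * hh1 k x"
            using x hh1_nonneg[of k x] k by (intro mult_right_mono mult_left_mono) auto
          then show ?thesis using hh_ratio[OF k x(1)] by (simp add: power2_eq_square algebra_simps)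
        qed
        have h3: "0 \<le> th1c \<sigma> (\<delta> n) x * f1 x" using th1c_range[OF delta_pos] f1_nonneg[of x] x by simp
        have h4: "0 \<le> e/2 * x * (th1c \<sigma> (\<delta> n) x * f1 x)" using h3 x e by simp
        have g1: "G1 n x = thc \<sigma> (\<delta> n) x * f1 x + hh k x" unfolding G1_def P_def k_def by simp
        have g2: "e/2 * x * G2 n x = e/2 * x * (th1c \<sigma> (\<delta> n) x * f1 x) + e/2 * x * (thc \<sigma> (\<delta> n) x * f2 x) + e/2 * x * hh1 k x"
          unfolding G2_def P1_def k_def by (simp add: algebra_simps)
        have "G1 n x \<le> e/2 * x * G2 n x" unfolding g1 g2 using h1 h2 h4 by linarith
        then have u: "G1 n x / (x * G2 n x) \<le> e/2" using x G2p by (simp add: divide_le_eq mult.commute mult.left_commute)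
        have l: "0 \<le> G1 n x / (x * G2 n x)"
        proof -
          have "0 \<le> G1 n x" unfolding G1_def P_def using th f1_nonneg[of x] x hh_nonneg by simp
          then show ?thesis using x G2p by simp
        qed
        have "\<bar>G1 n x / (x * G2 n x) - a_fun \<sigma> f1 f2 x\<bar> < e"
          by (subst abs_less_iff) (use u l a_b e in linarith)
        then show ?thesis by (simp add: dist_real_def)
      next
        case False
        then have xK2: "x \<in> K2" unfolding K2_def using xK by auto
        have xs: "x > \<sigma>" "x \<ge> \<sigma> + 2 * \<delta> n" using False elim(1) eta by auto
        have "\<bar>(f1 x + hh k x) / (x * (f2 x + hh1 k x)) - f1 x / (x * f2 x)\<bar>
            \<le> 3125 * R^5 / k^5 / (c * m) + A * (3125 * R^3 / k^4) / (c * m^2)"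
        proof (rule alg_a)
          show "0 \<le> f1 x" using f1_nonneg x by simp
          show "m \<le> f2 x" using m xK2 by simp
          show "hh k x \<le> 3125 * R^5 / k^5"
            using hh_bound[OF k x(1)] x k by (smt (verit) divide_right_mono mult_left_mono power_mono zero_le_power)
          show "hh1 k x \<le> 3125 * R^3 / k^4"
            using hh1_bound[OF k x(1)] x k by (smt (verit) divide_right_mono mult_left_mono power_mono zero_le_power)
          show "f1 x \<le> A" unfolding A_def using x by (intro f1_mono) auto
        qed (use m c x hh_nonneg hh1_nonneg k in auto)
        moreover have "G1 n x = f1 x + hh k x" "G2 n x = f2 x + hh1 k x" using G_big[OF xs(2)] k_def by auto
        moreover have "a_fun \<sigma> f1 f2 x = f1 x / (x * f2 x)" using xs by (simp add: a_fun_def)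
        ultimately have "dist (G1 n x / (x * G2 n x)) (a_fun \<sigma> f1 f2 x) \<le> bnd n"
          unfolding bnd_def k_def dist_real_def by simp
        then show ?thesis using elim(3) by simp
      qed
    qed
  qed
qed

lemma G_b:
  assumes K: "compact K" "K \<subseteq> {\<sigma><..}"
  shows "uniform_limit K (\<lambda>n s. s^2 / G2 n s) (b_fun \<sigma> f2) sequentially"
proof -
  obtain c where c: "c > \<sigma>" "\<And>x. x \<in> K \<Longrightarrow> c \<le> x" using compact_lower[OF K] by blast
  obtain R where R: "R \<ge> 0" "\<And>x. x \<in> K \<Longrightarrow> x \<le> R" using compact_bound_R[OF K(1)] by blast
  obtain m where m: "m > 0" "\<And>x. x \<in> K \<Longrightarrow> m \<le> f2 x"
  proof (rule compact_pos_min[OF K(1)])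
    show "continuous_on K f2" using f2_cont_on K(2) by (rule continuous_on_subset)
    fix x assume "x \<in> K" then show "f2 x > 0" using K f2_pos by auto
  qed blast
  show ?thesis
  proof (rule unif_bound)
    show "\<forall>\<^sub>F n in sequentially. \<forall>x\<in>K. \<bar>x^2 / G2 n x - b_fun \<sigma> f2 x\<bar> \<le> R^2 * (3125 * R^3 / (real n + 1)^4) / m^2"
    proof -
      have ev: "eventually (\<lambda>n. 2 * \<delta> n < c - \<sigma>) sequentially" using c(1) by (intro delta_ev) simp
      then show ?thesis
    proof eventually_elim
      case (elim n)
      define k where "k = real n + 1"
      have k: "k > 0" unfolding k_def by simp
      show ?case
      proof
        fix x assume xK: "x \<in> K"
        have x: "x > \<sigma>" "c \<le> x" "x \<le> R" using xK K c R by auto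
        have xb: "x \<ge> \<sigma> + 2 * \<delta> n" using x elim by simp
        have "\<bar>x^2 / (f2 x + hh1 k x) - x^2 / f2 x\<bar> \<le> R^2 * (3125 * R^3 / k^4) / m^2"
        proof (rule alg_b)
          show "hh1 k x \<le> 3125 * R^3 / k^4"
            using hh1_bound[OF k, of x] x sigma_pos k by (smt (verit) divide_right_mono mult_left_mono power_mono zero_le_power)
        qed (use m xK x sigma_pos hh1_nonneg k in auto)
        moreover have "G2 n x = f2 x + hh1 k x" using G_big[OF xb] k_def by auto
        moreover have "b_fun \<sigma> f2 x = x^2 / f2 x" using x by (simp add: b_fun_def)
        ultimately show "\<bar>x^2 / G2 n x - b_fun \<sigma> f2 x\<bar> \<le> R^2 * (3125 * R^3 / (real n + 1)^4) / m^2"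
          unfolding k_def by simp
      qed
    qed
    qed
    have "(\<lambda>n. R^2 * 3125 * R^3 / m^2 / (real n + 1)^Suc 3) \<longlonglongrightarrow> 0" by (rule lim_pow)
    then show "(\<lambda>n. R^2 * (3125 * R^3 / (real n + 1)^4) / m^2) \<longlonglongrightarrow> 0"
      by (simp add: field_simps eval_nat_numeral)
  qed
qed

lemma G_viii:
  assumes g: "\<forall>x>0. (f1 has_real_derivative g x) (at x)" "continuous_on {0<..} g"
    and K: "compact K" "K \<subseteq> {0<..}"
  shows "uniform_limit K G2 g sequentially"
proof -
  have g0: "g s = 0" if "0 < s" "s < \<sigma>" for s
  proof -
    have "((\<lambda>_. 0::real) has_real_derivative 0) (at s)" by simp
    then have "(f1 has_real_derivative 0) (at s)"
      by (rule has_field_derivative_transform_within_open[where S="{0<..<\<sigma>}"])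
         (use that f1_zero in auto)
    moreover have "(f1 has_real_derivative g s) (at s)" using g that by simp
    ultimately show ?thesis using DERIV_unique by blast
  qed
  have gc: "isCont g s" if "s > 0" for s
    using g(2) that by (simp add: continuous_on_eq_continuous_at)
  have gs: "g \<sigma> = 0"
  proof -
    have "(g \<longlongrightarrow> g \<sigma>) (at_left \<sigma>)"
      using gc[OF sigma_pos] by (simp add: isCont_def filterlim_at_split)
    moreover have "(g \<longlongrightarrow> 0) (at_left \<sigma>)"
    proof (rule tendsto_eventually)
      show "\<forall>\<^sub>F s in at_left \<sigma>. g s = 0"
        using eventually_at_left_real[OF sigma_pos] by eventually_elim (use g0 in auto)
    qed
    ultimately show ?thesis using tendsto_unique[OF trivial_limit_at_left_real] by blast
  qed
  have gf2: "g s = f2 s" if "s > \<sigma>" for s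
    using g f1_deriv that sigma_pos DERIV_unique by (metis less_trans)
  show ?thesis
  proof (rule uniform_limitI)
    fix e :: real assume e: "e > 0"
    obtain R where R: "R \<ge> 0" "\<And>x. x \<in> K \<Longrightarrow> x \<le> R" using compact_bound_R[OF K(1)] by blast
    obtain \<rho> where rho: "\<rho> > 0" "\<And>t. dist t \<sigma> < \<rho> \<Longrightarrow> dist (g t) (g \<sigma>) < e/8"
    proof -
      have "e/8 > 0" using e by simp
      then show ?thesis using gc[OF sigma_pos] that unfolding continuous_at_eps_delta by blast
    qed
    have rho': "\<bar>g t\<bar> < e/8" if "\<bar>t - \<sigma>\<bar> < \<rho>" for t
      using rho(2)[of t] that gs by (simp add: dist_real_def)
    have ev2: "eventually (\<lambda>n. 3125 * R^3 / (real n + 1)^Suc 3 < e/4) sequentially"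
      using e by (intro ev_small) auto
    show "\<forall>\<^sub>F n in sequentially. \<forall>x\<in>K. dist (G2 n x) (g x) < e"
      using delta_ev[OF rho(1)] ev2
    proof eventually_elim
      case (elim n)
      define k where "k = real n + 1"
      have k: "k > 0" unfolding k_def by simp
      show ?case
      proof
        fix x assume xK: "x \<in> K"
        have x: "x > 0" "x \<le> R" using xK K R by auto
        have h1: "0 \<le> hh1 k x" "hh1 k x < e/4"
        proof -
          show "0 \<le> hh1 k x" using hh1_nonneg k by simp
          have "hh1 k x \<le> 3125 * x^3 / k^4" by (rule hh1_bound[OF k x(1)])
          also have "\<dots> \<le> 3125 * R^3 / k^4" using x k by (intro divide_right_mono mult_left_mono power_mono) auto
          also have "\<dots> < e/4" using elim(2) unfolding k_def by simp
          finally show "hh1 k x < e/4" .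
        qed
        consider "x \<le> \<sigma>" | "x \<ge> \<sigma> + 2 * \<delta> n" | "\<sigma> < x \<and> x < \<sigma> + 2 * \<delta> n" by linarith
        then show "dist (G2 n x) (g x) < e"
        proof cases
          case 1
          have "g x = 0" using g0 gs x 1 by (cases "x = \<sigma>") auto
          then show ?thesis using G_small[OF 1, of n] h1 e unfolding k_def by (simp add: dist_real_def)
        next
          case 2
          have "g x = f2 x" using gf2 2 delta_pos[of n] by simp
          then show ?thesis using G_big[OF 2] h1 e unfolding k_def by (simp add: dist_real_def)
        next
          case 3
          have gx: "g x = f2 x" using gf2 3 by simp
          have f2s: "\<bar>f2 x\<bar> < e/8" using rho'[of x] 3 elim(1) gx by simp
          have "\<exists>z. \<sigma> < z \<and> z < x \<and> f1 x - f1 \<sigma> = (x - \<sigma>) * g z"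
            by (rule MVT2) (use 3 g sigma_pos in auto)
          then obtain z where z: "\<sigma> < z" "z < x" "f1 x - f1 \<sigma> = (x - \<sigma>) * g z" by blast
          have gz: "\<bar>g z\<bar> < e/8" using rho'[of z] z 3 elim(1) by simp
          have f1x: "\<bar>f1 x\<bar> \<le> 2 * \<delta> n * (e/8)"
          proof -
            have "\<bar>f1 x\<bar> = (x - \<sigma>) * \<bar>g z\<bar>" using z f1_zero[of \<sigma>] sigma_pos 3 by (simp add: abs_mult)
            also have "\<dots> \<le> 2 * \<delta> n * (e/8)" using 3 gz by (intro mult_mono) auto
            finally show ?thesis .
          qed
          have t1: "\<bar>th1c \<sigma> (\<delta> n) x * f1 x\<bar> \<le> e/2"
          proof -
            have "\<bar>th1c \<sigma> (\<delta> n) x * f1 x\<bar> = th1c \<sigma> (\<delta> n) x * \<bar>f1 x\<bar>"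
              using th1c_range[OF delta_pos] by (simp add: abs_mult)
            also have "\<dots> \<le> (2 / \<delta> n) * (2 * \<delta> n * (e/8))"
              using th1c_range[OF delta_pos] f1x delta_pos[of n] by (intro mult_mono) auto
            also have "\<dots> = e/2" using delta_pos[of n] by (simp add: field_simps)
            finally show ?thesis .
          qed
          have t2: "\<bar>(thc \<sigma> (\<delta> n) x - 1) * f2 x\<bar> \<le> e/8"
          proof -
            have "\<bar>(thc \<sigma> (\<delta> n) x - 1) * f2 x\<bar> = \<bar>thc \<sigma> (\<delta> n) x - 1\<bar> * \<bar>f2 x\<bar>" by (simp add: abs_mult)
            also have "\<dots> \<le> 1 * (e/8)" using thc_range[of \<sigma> "\<delta> n" x] f2s by (intro mult_mono) auto
            finally show ?thesis by simp
          qed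
          have "G2 n x - g x = th1c \<sigma> (\<delta> n) x * f1 x + (thc \<sigma> (\<delta> n) x - 1) * f2 x + hh1 k x"
            unfolding G2_def P1_def gx k_def by (simp add: algebra_simps)
          then have "\<bar>G2 n x - g x\<bar> \<le> e/2 + e/8 + e/4" using t1 t2 h1 by linarith
          then show ?thesis using e by (simp add: dist_real_def)
        qed
      qed
    qed
  qed
qed

end

theorem theorem3p4:
  fixes f f1 f2 f3 :: "real \<Rightarrow> real" and \<sigma> :: real
  assumes sigma_pos: "\<sigma> > 0"
    and f_convex: "convex_on {0..} f"
    and f_mono: "mono_on {0..} f"
    and f_deriv: "\<forall>x\<ge>0. (f has_real_derivative f1 x) (at x within {0..})"
    and f1_cont: "continuous_on {0..} f1"
    and f1_deriv: "\<forall>x>\<sigma>. (f1 has_real_derivative f2 x) (at x)"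
    and f2_deriv: "\<forall>x>\<sigma>. (f2 has_real_derivative f3 x) (at x)"
    and f3_cont: "continuous_on {\<sigma><..} f3"
    and f_zero: "f 0 = 0"
    and f_superlin: "filterlim (\<lambda>s. f s / s) at_top at_top"
    and f1_flat: "\<forall>s. 0 \<le> s \<and> s \<le> \<sigma> \<longrightarrow> f1 s = 0"
    and f2_pos: "\<forall>s>\<sigma>. f2 s > 0"
    and a_mono: "\<exists>\<sigma>'>\<sigma>. mono_on {\<sigma>..\<sigma>'} (a_fun \<sigma> f1 f2)"
  shows "\<exists>F F1 F2 F3 :: nat \<Rightarrow> real \<Rightarrow> real.
    (\<forall>n. convex_on {0..} (F n) \<and> F n 0 = 0 \<and> filterlim (\<lambda>s. F n s / s) at_top at_top
       \<comment> \<open>(i)\<close>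
       \<and> (\<forall>x\<ge>0. (F n has_real_derivative F1 n x) (at x within {0..}))
       \<and> continuous_on {0..} (F1 n)
       \<and> (\<forall>x>0. (F1 n has_real_derivative F2 n x) (at x))
       \<and> (\<forall>x>0. (F2 n has_real_derivative F3 n x) (at x))
       \<and> continuous_on {0<..} (F3 n)
       \<comment> \<open>(iii), first part\<close>
       \<and> F1 n 0 = 0
       \<and> (\<forall>x\<ge>0. F1 (Suc n) x \<le> F1 n x)
       \<comment> \<open>(iv)\<close>
       \<and> (\<forall>x>0. F2 n x > 0)
       \<comment> \<open>(v)\<close>
       \<and> ((\<lambda>s. (s * F2 n s - F1 n s) / s^3) \<longlongrightarrow> 0) (at_right 0)
       \<and> ((\<lambda>s. F1 n s / s) \<longlongrightarrow> 0) (at_right 0))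
    \<comment> \<open>(ii) and (iii)\<close>
    \<and> (\<forall>K. compact K \<and> K \<subseteq> {0..} \<longrightarrow> uniform_limit K F f sequentially)
    \<and> (\<forall>K. compact K \<and> K \<subseteq> {0..} \<longrightarrow> uniform_limit K F1 f1 sequentially)
    \<comment> \<open>(vi)\<close>
    \<and> (\<forall>K. compact K \<and> K \<subseteq> {0..<\<sigma>} \<longrightarrow>
         uniform_limit K (\<lambda>n s. (s * F2 n s - F1 n s) / s^3) (\<lambda>s. 0) sequentially
       \<and> uniform_limit K (\<lambda>n s. F1 n s / s) (\<lambda>s. 0) sequentially)
    \<comment> \<open>(vii)\<close>
    \<and> (\<forall>K. compact K \<and> K \<subseteq> {0<..} \<longrightarrow>
         uniform_limit K (\<lambda>n s. F1 n s / (s * F2 n s)) (a_fun \<sigma> f1 f2) sequentially)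
    \<and> (\<forall>K. compact K \<and> K \<subseteq> {\<sigma><..} \<longrightarrow>
         uniform_limit K (\<lambda>n s. s^2 / F2 n s) (b_fun \<sigma> f2) sequentially)
    \<comment> \<open>(viii)\<close>
    \<and> (\<forall>g. (\<forall>x>0. (f1 has_real_derivative g x) (at x)) \<and> continuous_on {0<..} g \<longrightarrow>
         (\<forall>K. compact K \<and> K \<subseteq> {0<..} \<longrightarrow> uniform_limit K F2 g sequentially))"
  proof -
  obtain \<sigma>' where am: "\<sigma>' > \<sigma>" "mono_on {\<sigma>..\<sigma>'} (a_fun \<sigma> f1 f2)" using a_mono by blast
  define mmv where "mmv n = exp (-(real n + 1)/\<sigma>) * (1 - exp (-1/(\<sigma>+2)))" for n :: nat
  have mpos: "mmv n > 0" for n using sigma_pos by (simp add: mmv_def)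
  have "\<forall>n. \<exists>d. 0 < d \<and> d \<le> 1 / (real n + 1) \<and> f1 (\<sigma> + 2 * d) \<le> mmv n"
  proof
    fix n
    have "continuous (at \<sigma> within {0..}) f1"
      using f1_cont sigma_pos unfolding continuous_on_eq_continuous_within by simp
    then obtain r where r: "r > 0" "\<forall>t\<in>{0..}. dist t \<sigma> < r \<longrightarrow> dist (f1 t) (f1 \<sigma>) < mmv n"
      using mpos[of n] unfolding continuous_within_eps_delta by blast
    define d where "d = min (1 / (real n + 1)) (r / 4)"
    have d: "d > 0" "d \<le> 1 / (real n + 1)" "2 * d < r" using r by (auto simp: d_def)
    have "dist (f1 (\<sigma> + 2 * d)) (f1 \<sigma>) < mmv n" using r(2) d sigma_pos by (auto simp: dist_real_def)
    then have "f1 (\<sigma> + 2 * d) \<le> mmv n" using f1_flat sigma_pos by (auto simp: dist_real_def)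
    then show "\<exists>d. 0 < d \<and> d \<le> 1 / (real n + 1) \<and> f1 (\<sigma> + 2 * d) \<le> mmv n" using d by blast
  qed
  then obtain \<delta> where \<delta>: "\<And>n. 0 < \<delta> n \<and> \<delta> n \<le> 1 / (real n + 1) \<and> f1 (\<sigma> + 2 * \<delta> n) \<le> mmv n"
    by metis
  interpret L f f1 f2 f3 \<sigma> \<delta>
  proof
    show "\<And>n. \<delta> n > 0" "\<And>n. \<delta> n \<le> 1 / (real n + 1)"
      "\<And>n. f1 (\<sigma> + 2 * \<delta> n) \<le> exp (-(real n + 1)/\<sigma>) * (1 - exp (-1/(\<sigma>+2)))"
      using \<delta> unfolding mmv_def by auto
  qed (use assms in auto)
  show ?thesis
  proof (intro exI conjI allI impI)
    fix n
    show "convex_on {0..} (G n)" by (rule G_convex)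
    show "G n 0 = 0" by (rule G_zero)
    show "filterlim (\<lambda>s. G n s / s) at_top at_top" by (rule G_superlin)
    show "\<And>x. x \<ge> 0 \<Longrightarrow> (G n has_real_derivative G1 n x) (at x within {0..})"
      by (rule has_field_derivative_at_within, rule G_deriv) simp
    show "continuous_on {0..} (G1 n)" using G1_cont by (rule continuous_on_subset) simp
    show "\<And>x. x > 0 \<Longrightarrow> (G1 n has_real_derivative G2 n x) (at x)" by (rule G1_deriv)
    show "\<And>x. x > 0 \<Longrightarrow> (G2 n has_real_derivative G3 n x) (at x)" by (rule G2_deriv)
    show "continuous_on {0<..} (G3 n)" by (rule G3_cont)
    show "G1 n 0 = 0" by (rule G1_nonpos) simp
    show "\<And>x. x \<ge> 0 \<Longrightarrow> G1 (Suc n) x \<le> G1 n x" by (rule G1_mono_n)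
    show "\<And>x. x > 0 \<Longrightarrow> G2 n x > 0" by (rule G2_pos)
    show "((\<lambda>s. (s * G2 n s - G1 n s) / s^3) \<longlongrightarrow> 0) (at_right 0)" by (rule G_lim0a)
    show "((\<lambda>s. G1 n s / s) \<longlongrightarrow> 0) (at_right 0)" by (rule G_lim0b)
  next
    fix K :: "real set" assume "compact K \<and> K \<subseteq> {0..}"
    then show "uniform_limit K G f sequentially" using G_unif by blast
  next
    fix K :: "real set" assume "compact K \<and> K \<subseteq> {0..}"
    then show "uniform_limit K G1 f1 sequentially" using G1_unif by blast
  next
    fix K :: "real set" assume "compact K \<and> K \<subseteq> {0..<\<sigma>}"
    then show "uniform_limit K (\<lambda>n s. (s * G2 n s - G1 n s) / s^3) (\<lambda>s. 0) sequentially"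
      using G_vi by blast
  next
    fix K :: "real set" assume "compact K \<and> K \<subseteq> {0..<\<sigma>}"
    then show "uniform_limit K (\<lambda>n s. G1 n s / s) (\<lambda>s. 0) sequentially"
      using G_vi by blast
  next
    fix K :: "real set" assume "compact K \<and> K \<subseteq> {0<..}"
    then show "uniform_limit K (\<lambda>n s. G1 n s / (s * G2 n s)) (a_fun \<sigma> f1 f2) sequentially"
      using G_a[OF am] by blast
  next
    fix K :: "real set" assume "compact K \<and> K \<subseteq> {\<sigma><..}"
    then show "uniform_limit K (\<lambda>n s. s^2 / G2 n s) (b_fun \<sigma> f2) sequentially"
      using G_b by blast
  next
    fix g :: "real \<Rightarrow> real" and K :: "real set"
    assume "(\<forall>x>0. (f1 has_real_derivative g x) (at x)) \<and> continuous_on {0<..} g"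
      and "compact K \<and> K \<subseteq> {0<..}"
    then show "uniform_limit K G2 g sequentially" using G_viii by blast
  qed
qed


end
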